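(* Let $n\ge k\ge 1$ and let $\mathbf{M}$ be a $k\times n$ binary matrix all of whose rows have Hamming weight exactly $n-k+1$ and which satisfies the MDS Condition. For $i\in[k]$ let $Z_i=\{j\in[n]: m_{i,j}=0\}$ (so $|Z_i|=k-1$). Suppose that the family $(Z_1,\ldots,Z_k)$ has a unique multiset union. Then for every prime power $q\geq n+k-1$ there exists an $[n,k]_q$ MDS code having a generator matrix that fits $\mathbf{M}$. In particular, if every family of $(k-1)$-subsets $Z_1,\dots,Z_k$ of $[n]$ satisfying $|\bigcap_{i\in I}Z_i|\le k-|I|$ for all nonempty $I\subseteq[k]$ (for all $n\ge k\ge1$) has a unique multiset union, then for all such $\mathbf{M}$ and all prime powers $q\ge n+k-1$ such an MDS code exists.
   Context: $[n]=\{1,\ldots,n\}$. For a $k\times n$ binary matrix $\mathbf{M}=(m_{i,j})$ with rows $\mathbf{M}_i$, ${\sf supp}(\mathbf{M}_i)=\{j: m_{i,j}\ne 0\}$; $\mathbf{M}$ satisfies the MDS Condition if $|\bigcup_{i\in I}{\sf supp}(\mathbf{M}_i)|\ge n-k+|I|$ for all nonempty $I\subseteq[k]$. A matrix $\mathbf{G}=(g_{i,j})\in\mathbb{F}_q^{k\times n}$ fits $\mathbf{M}$ if $g_{i,j}=0$ whenever $m_{i,j}=0$. An $[n,k]_q$ MDS code is a $k$-dimensional linear code in $\mathbb{F}_q^n$ with minimum distance $n-k+1$. Multiset unions: given $(k-1)$-subsets $Z_1,\ldots,Z_k$ of $[n]$, a choice is a pair $(\sigma,(S_1,\ldots,S_k))$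 where $\sigma$ is a permutation of $[k]$ and $S_i\subseteq Z_i$ with $|S_i|=\sigma(i)-1$ for each $i$; its multiset union is the multiset $S_1\uplus\cdots\uplus S_k$ (multiplicity of $j$ = number of $i$ with $j\in S_i$). The family $(Z_1,\ldots,Z_k)$ has a unique multiset union if there is a multiset that arises as the multiset union of exactly one choice. *)

theory Defs
  imports Main "HOL-Library.Multiset" "HOL-Combinatorics.Permutations"
begin

text \<open>Binary k x n matrices are functions M :: nat => nat => bool, rows indexed by 1..k,
  columns by 1..n. Matrices over a field are functions G :: nat => nat => 'a.\<close>

definition row_supp :: "nat \<Rightarrow> (nat \<Rightarrow> nat \<Rightarrow> bool) \<Rightarrow> nat \<Rightarrow> nat set" where
  "row_supp n M i = {j \<in> {1..n}. M i j}"

definition zero_set :: "nat \<Rightarrow> (nat \<Rightarrow> nat \<Rightarrow> bool) \<Rightarrow> nat \<Rightarrow> nat set" where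
  "zero_set n M i = {j \<in> {1..n}. \<not> M i j}"

definition MDS_condition :: "nat \<Rightarrow> nat \<Rightarrow> (nat \<Rightarrow> nat \<Rightarrow> bool) \<Rightarrow> bool" where
  "MDS_condition n k M \<longleftrightarrow>
     (\<forall>I. I \<subseteq> {1..k} \<and> I \<noteq> {} \<longrightarrow> card (\<Union>i\<in>I. row_supp n M i) \<ge> n - k + card I)"

definition fits :: "nat \<Rightarrow> nat \<Rightarrow> (nat \<Rightarrow> nat \<Rightarrow> bool) \<Rightarrow> (nat \<Rightarrow> nat \<Rightarrow> 'a::zero) \<Rightarrow> bool" where
  "fits n k M G \<longleftrightarrow> (\<forall>i\<in>{1..k}. \<forall>j\<in>{1..n}. \<not> M i j \<longrightarrow> G i j = 0)"

definition gen_code :: "nat \<Rightarrow> nat \<Rightarrow> (nat \<Rightarrow> nat \<Rightarrow> 'a::field) \<Rightarrow> (nat \<Rightarrow> 'a) set" where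
  "gen_code n k G = {w. \<exists>c. w = (\<lambda>j. if j \<in> {1..n} then (\<Sum>i\<in>{1..k}. c i * G i j) else 0)}"

definition hamming_dist :: "nat \<Rightarrow> (nat \<Rightarrow> 'a) \<Rightarrow> (nat \<Rightarrow> 'a) \<Rightarrow> nat" where
  "hamming_dist n u v = card {j \<in> {1..n}. u j \<noteq> v j}"

definition min_distance :: "nat \<Rightarrow> (nat \<Rightarrow> 'a) set \<Rightarrow> nat" where
  "min_distance n C = Min {hamming_dist n u v | u v. u \<in> C \<and> v \<in> C \<and> u \<noteq> v}"

definition MDS_generator :: "nat \<Rightarrow> nat \<Rightarrow> (nat \<Rightarrow> nat \<Rightarrow> 'a::field) \<Rightarrow> bool" where
  "MDS_generator n k G \<longleftrightarrow>
     (\<forall>c. (\<forall>j\<in>{1..n}. (\<Sum>i\<in>{1..k}. c i * G i j) = 0) \<longrightarrow> (\<forall>i\<in>{1..k}. c i = 0))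
     \<and> min_distance n (gen_code n k G) = n - k + 1"

definition choices :: "nat \<Rightarrow> (nat \<Rightarrow> nat set) \<Rightarrow> ((nat \<Rightarrow> nat) \<times> (nat \<Rightarrow> nat set)) set" where
  "choices k Z = {(\<sigma>, S). \<sigma> permutes {1..k}
       \<and> (\<forall>i\<in>{1..k}. S i \<subseteq> Z i \<and> card (S i) = \<sigma> i - 1)
       \<and> (\<forall>i. i \<notin> {1..k} \<longrightarrow> S i = {})}"

definition multiset_union :: "nat \<Rightarrow> (nat \<Rightarrow> nat set) \<Rightarrow> nat multiset" where
  "multiset_union k S = (\<Sum>i\<in>{1..k}. mset_set (S i))"

definition unique_multiset_union :: "nat \<Rightarrow> (nat \<Rightarrow> nat set) \<Rightarrow> bool" where
  "unique_multiset_union k Z \<longleftrightarrow>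
     (\<exists>U. \<exists>!ch. ch \<in> choices k Z \<and> multiset_union k (snd ch) = U)"

end

theory Submission
  imports Defs "Jordan_Normal_Form.Determinant"
begin


lemma nonvanish:
  fixes c :: "(nat \<Rightarrow> nat) \<Rightarrow> 'a::{finite,field}"
  assumes "finite Ms" "\<forall>m\<in>Ms. \<forall>j\<in>{1..N}. m j \<le> d"
    "(\<Sum>m\<in>{m\<in>Ms. \<forall>j\<in>{1..N}. m j = m0 j}. c m) \<noteq> 0"
    "N + d \<le> card (UNIV::'a set)"
  shows "\<exists>\<alpha>. inj_on \<alpha> {1..N} \<and> (\<Sum>m\<in>Ms. c m * (\<Prod>j\<in>{1..N}. \<alpha> j ^ m j)) \<noteq> 0"
  using assms
proof (induction N arbitrary: Ms)
  case 0
  then show ?case by auto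
next
  case (Suc N)
  define e0 where "e0 = m0 (Suc N)"
  define Ms' where "Ms' = {m\<in>Ms. m (Suc N) = e0}"
  have eq1: "{m\<in>Ms'. \<forall>j\<in>{1..N}. m j = m0 j} = {m\<in>Ms. \<forall>j\<in>{1..Suc N}. m j = m0 j}"
    unfolding Ms'_def e0_def using le_Suc_eq by auto
  have "\<exists>\<alpha>. inj_on \<alpha> {1..N} \<and> (\<Sum>m\<in>Ms'. c m * (\<Prod>j\<in>{1..N}. \<alpha> j ^ m j)) \<noteq> 0"
  proof (rule Suc.IH)
    show "finite Ms'" using Suc.prems(1) unfolding Ms'_def by auto
    show "\<forall>m\<in>Ms'. \<forall>j\<in>{1..N}. m j \<le> d" using Suc.prems(2) unfolding Ms'_def by auto
    show "(\<Sum>m\<in>{m\<in>Ms'. \<forall>j\<in>{1..N}. m j = m0 j}. c m) \<noteq> 0" unfolding eq1 by (rule Suc.prems(3))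
    show "N + d \<le> card (UNIV::'a set)" using Suc.prems(4) by auto
  qed
  then obtain \<alpha> where inj: "inj_on \<alpha> {1..N}" and ne: "(\<Sum>m\<in>Ms'. c m * (\<Prod>j\<in>{1..N}. \<alpha> j ^ m j)) \<noteq> 0"
    by blast
  define Q where "Q e = (\<Sum>m\<in>{m\<in>Ms. m (Suc N) = e}. c m * (\<Prod>j\<in>{1..N}. \<alpha> j ^ m j))" for e
  have Qe0: "Q e0 \<noteq> 0" using ne unfolding Q_def Ms'_def .
  have "e0 \<le> d"
  proof -
    have "{m\<in>Ms. \<forall>j\<in>{1..Suc N}. m j = m0 j} \<noteq> {}" using Suc.prems(3) by (metis sum.empty)
    then obtain m where m: "m \<in> Ms" "\<forall>j\<in>{1..Suc N}. m j = m0 j" by blast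
    then have "m (Suc N) = e0" unfolding e0_def by simp
    moreover have "m (Suc N) \<le> d" using Suc.prems(2) m(1) by simp
    ultimately show ?thesis by simp
  qed
  define p where "p = (\<Sum>e\<in>{0..d}. monom (Q e) e)"
  have "coeff p e0 = Q e0" unfolding p_def coeff_sum using \<open>e0 \<le> d\<close>
    by (simp add: coeff_monom)
  then have p0: "p \<noteq> 0" using Qe0 by auto
  have "degree p \<le> d" unfolding p_def
    by (rule degree_sum_le) (auto intro: order.trans[OF degree_monom_le])
  then have cr: "card {x. poly p x = 0} \<le> d" using card_poly_roots_bound[OF p0] by linarith
  define Bad where "Bad = \<alpha> ` {1..N} \<union> {x. poly p x = 0}"
  have "card Bad \<le> N + d" unfolding Bad_def
    by (rule order.trans[OF card_Un_le]) (use cr card_image_le[of "{1..N}" \<alpha>] in auto)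
  then have "Bad \<noteq> UNIV" using Suc.prems(4) by auto
  then obtain x where x: "x \<notin> Bad" by auto
  define \<beta> where "\<beta> = \<alpha>(Suc N := x)"
  have "inj_on \<beta> {1..Suc N}"
  proof -
    have e: "{1..Suc N} = insert (Suc N) {1..N}" by auto
    have eqa: "\<And>j. j \<in> {1..N} \<Longrightarrow> \<beta> j = \<alpha> j" unfolding \<beta>_def by simp
    have i: "inj_on \<beta> {1..N}" using inj inj_on_cong[of "{1..N}" \<beta> \<alpha>] eqa by blast
    have im: "\<beta> ` {1..N} = \<alpha> ` {1..N}" using eqa by (rule image_cong[OF refl])
    have "\<beta> (Suc N) = x" unfolding \<beta>_def by simp
    then have "\<beta> (Suc N) \<notin> \<beta> ` {1..N}" using x unfolding im Bad_def by blast
    moreover have "Suc N \<notin> {1..N}" by simp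
    ultimately show ?thesis unfolding e using i by (simp only: inj_on_insert Diff_empty Diff_insert_absorb) blast
  qed
  moreover have "(\<Sum>m\<in>Ms. c m * (\<Prod>j\<in>{1..Suc N}. \<beta> j ^ m j)) = poly p x"
  proof -
    have "(\<Sum>m\<in>Ms. c m * (\<Prod>j\<in>{1..Suc N}. \<beta> j ^ m j))
        = (\<Sum>m\<in>Ms. c m * (\<Prod>j\<in>{1..N}. \<alpha> j ^ m j) * x ^ m (Suc N))"
    proof (rule sum.cong[OF refl])
      fix m assume "m \<in> Ms"
      have "(\<Prod>j\<in>{1..N}. \<beta> j ^ m j) = (\<Prod>j\<in>{1..N}. \<alpha> j ^ m j)"
        by (rule prod.cong) (auto simp: \<beta>_def)
      then show "c m * (\<Prod>j\<in>{1..Suc N}. \<beta> j ^ m j) = c m * (\<Prod>j\<in>{1..N}. \<alpha> j ^ m j) * x ^ m (Suc N)"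
        by (simp add: prod.cl_ivl_Suc \<beta>_def mult.assoc)
    qed
    also have "\<dots> = (\<Sum>e\<in>{0..d}. \<Sum>m\<in>{m. m \<in> Ms \<and> m (Suc N) = e}. c m * (\<Prod>j\<in>{1..N}. \<alpha> j ^ m j) * x ^ m (Suc N))"
      by (rule sum.group[symmetric]) (use Suc.prems in auto)
    also have "\<dots> = (\<Sum>e\<in>{0..d}. Q e * x ^ e)"
      unfolding Q_def sum_distrib_right by (auto intro!: sum.cong)
    also have "\<dots> = poly p x" unfolding p_def poly_sum by (simp add: poly_monom)
    finally show ?thesis .
  qed
  moreover have "poly p x \<noteq> 0" using x unfolding Bad_def by auto
  ultimately show ?case by metis
qed



lemma coeff_prod_linear:
  fixes b :: "nat \<Rightarrow> 'a::field"
  assumes "finite Z"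
  shows "coeff (\<Prod>j\<in>Z. [:b j, 1:]) t = (\<Sum>S\<in>{S. S \<subseteq> Z \<and> card S + t = card Z}. \<Prod>j\<in>S. b j)"
  using assms
proof (induction Z arbitrary: t rule: finite_induct)
  case empty
  show ?case
  proof (cases t)
    case 0
    have "{S. S \<subseteq> {} \<and> card S + t = card ({}::nat set)} = {{}}" (is "?X = _") using 0 by auto
    show ?thesis by (subst \<open>?X = _\<close>) (simp add: 0)
  next
    case (Suc m)
    have "{S. S \<subseteq> {} \<and> card S + t = card ({}::nat set)} = {}" (is "?X = _") using Suc by auto
    show ?thesis by (subst \<open>?X = _\<close>) (simp add: Suc)
  qed
next
  case (insert a Z)
  define P where "P = (\<Prod>j\<in>Z. [:b j, 1:])"
  have "(\<Prod>j\<in>insert a Z. [:b j, 1:]) = smult (b a) P + pCons 0 P"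
    using insert.hyps by (simp add: P_def mult_pCons_left)
  then have L: "coeff (\<Prod>j\<in>insert a Z. [:b j, 1:]) t = b a * coeff P t + (case t of 0 \<Rightarrow> 0 | Suc m \<Rightarrow> coeff P m)"
    by (simp add: coeff_pCons)
  define A where "A = {S. S \<subseteq> insert a Z \<and> card S + t = card (insert a Z)}"
  define A1 where "A1 = {S\<in>A. a \<in> S}"
  define A2 where "A2 = {S\<in>A. a \<notin> S}"
  have finA: "finite A" unfolding A_def using insert.hyps(1) by (simp add: finite_subset)
  have AU: "A = A1 \<union> A2" and dj: "A1 \<inter> A2 = {}" unfolding A1_def A2_def by auto
  have f1: "finite A1" "finite A2" unfolding A1_def A2_def using finA by auto
  have split: "(\<Sum>S\<in>A. \<Prod>j\<in>S. b j) = (\<Sum>S\<in>A1. \<Prod>j\<in>S. b j) + (\<Sum>S\<in>A2. \<Prod>j\<in>S. b j)"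
    by (subst AU) (rule sum.union_disjoint[OF f1 dj])
  define B where "B = {S. S \<subseteq> Z \<and> card S + t = card Z}"
  have A1eq: "A1 = insert a ` B"
  proof
    show "A1 \<subseteq> insert a ` B"
    proof
      fix S assume S: "S \<in> A1"
      then have "a \<in> S" "S \<subseteq> insert a Z" "card S + t = Suc (card Z)"
        unfolding A1_def A_def using insert.hyps by auto
      moreover have "finite S" using \<open>S \<subseteq> insert a Z\<close> insert.hyps(1) finite_subset by blast
      moreover have "card S > 0" using \<open>finite S\<close> \<open>a \<in> S\<close> card_gt_0_iff by blast
      ultimately have "S - {a} \<in> B" "S = insert a (S - {a})" unfolding B_def by auto
      then show "S \<in> insert a ` B" by blast
    qed
  next
    show "insert a ` B \<subseteq> A1"
    proof
      fix S assume "S \<in> insert a ` B"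
      then obtain S' where "S' \<in> B" "S = insert a S'" by blast
      moreover have "finite S'" using \<open>S' \<in> B\<close> insert.hyps(1) finite_subset unfolding B_def by blast
      moreover have "a \<notin> S'" using \<open>S' \<in> B\<close> insert.hyps(2) unfolding B_def by blast
      ultimately show "S \<in> A1" unfolding A1_def A_def B_def using insert.hyps by auto
    qed
  qed
  have injB: "inj_on (insert a) B"
  proof (rule inj_onI)
    fix x y assume "x \<in> B" "y \<in> B" "insert a x = insert a y"
    moreover have "a \<notin> x" "a \<notin> y" using \<open>x \<in> B\<close> \<open>y \<in> B\<close> insert.hyps(2) unfolding B_def by auto
    ultimately show "x = y" by (metis Diff_insert_absorb)
  qed
  have s1: "(\<Sum>S\<in>A1. \<Prod>j\<in>S. b j) = b a * coeff P t"
  proof -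
    have "(\<Sum>S\<in>A1. \<Prod>j\<in>S. b j) = (\<Sum>S\<in>B. \<Prod>j\<in>insert a S. b j)"
      unfolding A1eq by (rule sum.reindex[OF injB, unfolded comp_def])
    also have "\<dots> = (\<Sum>S\<in>B. b a * (\<Prod>j\<in>S. b j))"
    proof (rule sum.cong[OF refl])
      fix S assume "S \<in> B"
      then have "S \<subseteq> Z" unfolding B_def by simp
      then have "finite S" "a \<notin> S" using finite_subset[OF _ insert.hyps(1)] insert.hyps(2) by auto
      then show "(\<Prod>j\<in>insert a S. b j) = b a * (\<Prod>j\<in>S. b j)" by simp
    qed
    also have "\<dots> = b a * coeff P t" unfolding P_def insert.IH B_def by (simp add: sum_distrib_left)
    finally show ?thesis .
  qed
  have s2: "(\<Sum>S\<in>A2. \<Prod>j\<in>S. b j) = (case t of 0 \<Rightarrow> 0 | Suc m \<Rightarrow> coeff P m)"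
  proof (cases t)
    case 0
    have "A2 = {}"
    proof (rule ccontr)
      assume "A2 \<noteq> {}"
      then obtain S where "S \<in> A2" by blast
      then have "S \<subseteq> insert a Z" "a \<notin> S" "card S + t = card (insert a Z)" unfolding A2_def A_def by auto
      then have "S \<subseteq> Z" "card S = Suc (card Z)" using card_insert_disjoint[OF insert.hyps] 0 by auto
      then show False using card_mono[OF insert.hyps(1), of S] by simp
    qed
    then show ?thesis unfolding 0 by simp
  next
    case (Suc m)
    have "A2 = {S. S \<subseteq> Z \<and> card S + m = card Z}"
      unfolding A2_def A_def card_insert_disjoint[OF insert.hyps] Suc using insert.hyps(2) by auto
    then show ?thesis unfolding P_def insert.IH Suc by simp
  qed
  show ?case unfolding L A_def[symmetric] split s1 s2 ..
qed



lemma det_ext: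
  fixes E :: "nat \<Rightarrow> nat \<Rightarrow> 'a::comm_ring_1"
  shows "det (mat (Suc k) (Suc k) (\<lambda>(i,t). if i = 0 \<and> t = 0 then 1 else if i = 0 \<or> t = 0 then 0 else E i t))
     = (\<Sum>\<sigma>\<in>{\<sigma>. \<sigma> permutes {1..k}}. of_int (sign \<sigma>) * (\<Prod>i\<in>{1..k}. E i (\<sigma> i)))"
proof -
  define A where "A = mat (Suc k) (Suc k) (\<lambda>(i,t). if i = 0 \<and> t = 0 then 1 else if i = 0 \<or> t = 0 then 0 else E i t)"
  define T where "T p = (of_int (sign p) :: 'a) * (\<Prod>i = 0..<Suc k. A $$ (i, p i))" for p
  have "det A = (\<Sum>p\<in>{p. p permutes {0..<Suc k}}. T p)"
    unfolding det_def T_def A_def by simp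
  also have "\<dots> = (\<Sum>p\<in>{p. p permutes {1..k}}. T p)"
  proof (rule sum.mono_neutral_right)
    show "finite {p. p permutes {0..<Suc k}}" by (rule finite_permutations) simp
    show "{p. p permutes {1..k}} \<subseteq> {p. p permutes {0..<Suc k}}"
      by (auto intro: permutes_subset)
    show "\<forall>p\<in>{p. p permutes {0..<Suc k}} - {p. p permutes {1..k}}. T p = 0"
    proof
      fix p assume p: "p \<in> {p. p permutes {0..<Suc k}} - {p. p permutes {1..k}}"
      then have pp: "p permutes {0..<Suc k}" and np: "\<not> p permutes {1..k}" by auto
      have "p 0 \<noteq> 0"
      proof
        assume "p 0 = 0"
        have "\<forall>x. x \<notin> {1..k} \<longrightarrow> p x = x"
        proof (intro allI impI)
          fix x assume "x \<notin> {1..k}"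
          then have "x = 0 \<or> x \<notin> {0..<Suc k}" by auto
          then show "p x = x" using \<open>p 0 = 0\<close> permutes_not_in[OF pp] by auto
        qed
        moreover have "\<forall>y. \<exists>!x. p x = y" using pp unfolding permutes_def by blast
        ultimately show False using np unfolding permutes_def by blast
      qed
      moreover have "p 0 < Suc k" using permutes_in_image[OF pp, of 0] by simp
      ultimately have "A $$ (0, p 0) = 0" unfolding A_def by simp
      then have "(\<Prod>i = 0..<Suc k. A $$ (i, p i)) = 0"
        by (intro prod_zero) auto
      then show "T p = 0" unfolding T_def by simp
    qed
  qed
  also have "\<dots> = (\<Sum>\<sigma>\<in>{\<sigma>. \<sigma> permutes {1..k}}. of_int (sign \<sigma>) * (\<Prod>i\<in>{1..k}. E i (\<sigma> i)))"
  proof (rule sum.cong[OF refl])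
    fix p assume "p \<in> {p. p permutes {1..k}}"
    then have pp: "p permutes {1..k}" by simp
    have p0: "p 0 = 0" using permutes_not_in[OF pp] by simp
    have "{0..<Suc k} = insert 0 {1..k}" by auto
    then have "(\<Prod>i = 0..<Suc k. A $$ (i, p i)) = A $$ (0, p 0) * (\<Prod>i\<in>{1..k}. A $$ (i, p i))"
      by simp
    also have "\<dots> = (\<Prod>i\<in>{1..k}. E i (p i))"
    proof -
      have "A $$ (0, p 0) = 1" unfolding A_def p0 by simp
      moreover have "(\<Prod>i\<in>{1..k}. A $$ (i, p i)) = (\<Prod>i\<in>{1..k}. E i (p i))"
      proof (rule prod.cong[OF refl])
        fix i assume i: "i \<in> {1..k}"
        then have "p i \<in> {1..k}" using permutes_in_image[OF pp] by simp
        then show "A $$ (i, p i) = E i (p i)" using i unfolding A_def by auto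
      qed
      ultimately show ?thesis by simp
    qed
    finally show "T p = of_int (sign p) * (\<Prod>i\<in>{1..k}. E i (p i))" unfolding T_def by simp
  qed
  finally show ?thesis unfolding A_def .
qed



lemma mon:
  fixes \<beta> :: "nat \<Rightarrow> 'a::comm_monoid_mult"
  assumes "\<forall>i\<in>I. S i \<subseteq> J" "finite I" "finite J"
  shows "(\<Prod>i\<in>I. \<Prod>j\<in>S i. \<beta> j) = (\<Prod>j\<in>J. \<beta> j ^ count (\<Sum>i\<in>I. mset_set (S i)) j)"
proof -
  have fS: "finite (S i)" if "i \<in> I" for i using assms that finite_subset by blast
  have "(\<Prod>i\<in>I. \<Prod>j\<in>S i. \<beta> j) = (\<Prod>i\<in>I. \<Prod>j\<in>J. \<beta> j ^ (if j \<in> S i then 1 else 0))"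
  proof (rule prod.cong[OF refl])
    fix i assume i: "i \<in> I"
    have "{j\<in>J. j \<in> S i} = S i" using assms(1) i by auto
    then have "(\<Prod>j\<in>S i. \<beta> j) = (\<Prod>j\<in>{j\<in>J. j \<in> S i}. \<beta> j)" by simp
    also have "\<dots> = (\<Prod>j\<in>J. if j \<in> S i then \<beta> j else 1)" by (rule prod.inter_filter[OF assms(3)])
    also have "\<dots> = (\<Prod>j\<in>J. \<beta> j ^ (if j \<in> S i then 1 else 0))" by (rule prod.cong) auto
    finally show "(\<Prod>j\<in>S i. \<beta> j) = (\<Prod>j\<in>J. \<beta> j ^ (if j \<in> S i then 1 else 0))" .
  qed
  also have "\<dots> = (\<Prod>j\<in>J. \<Prod>i\<in>I. \<beta> j ^ (if j \<in> S i then 1 else 0))" by (rule prod.swap)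
  also have "\<dots> = (\<Prod>j\<in>J. \<beta> j ^ (\<Sum>i\<in>I. (if j \<in> S i then 1 else 0)))" by (simp add: power_sum)
  also have "\<dots> = (\<Prod>j\<in>J. \<beta> j ^ count (\<Sum>i\<in>I. mset_set (S i)) j)"
  proof (rule prod.cong[OF refl])
    fix j
    have "count (\<Sum>i\<in>I. mset_set (S i)) j = (\<Sum>i\<in>I. count (mset_set (S i)) j)" by (rule count_sum)
    also have "\<dots> = (\<Sum>i\<in>I. (if j \<in> S i then 1 else 0))" by (rule sum.cong) (auto simp: fS)
    finally show "\<beta> j ^ (\<Sum>i\<in>I. (if j \<in> S i then 1 else 0)) = \<beta> j ^ count (\<Sum>i\<in>I. mset_set (S i)) j" by simp
  qed
  finally show ?thesis .
qed

definition Ent :: "(nat \<Rightarrow> nat set) \<Rightarrow> (nat \<Rightarrow> 'a::comm_ring_1) \<Rightarrow> nat \<Rightarrow> nat \<Rightarrow> 'a" where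
  "Ent Z \<beta> i t = (\<Sum>S\<in>{S. S \<subseteq> Z i \<and> card S = t}. \<Prod>j\<in>S. \<beta> j)"

lemma leib_expand:
  fixes \<beta> :: "nat \<Rightarrow> 'a::comm_ring_1"
  assumes Z: "\<forall>i\<in>{1..k}. Z i \<subseteq> {1..n}"
  shows "finite (choices k Z)"
    "(\<Sum>\<sigma>\<in>{\<sigma>. \<sigma> permutes {1..k}}. of_int (sign \<sigma>) * (\<Prod>i\<in>{1..k}. Ent Z \<beta> i (\<sigma> i - 1)))
     = (\<Sum>ch\<in>choices k Z. of_int (sign (fst ch)) * (\<Prod>j\<in>{1..n}. \<beta> j ^ count (multiset_union k (snd ch)) j))"
proof -
  define P where "P = {\<sigma>. \<sigma> permutes {1..k}}"
  define SS where "SS \<sigma> i = {S. S \<subseteq> Z i \<and> card S = \<sigma> i - 1}" for \<sigma> i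
  define pr where "pr S = (\<Prod>j\<in>S. \<beta> j)" for S
  define Sig where "Sig = Sigma P (\<lambda>\<sigma>. PiE {1..k} (SS \<sigma>))"
  define ext where "ext h = (\<lambda>i. if i \<in> {1..k} then h i else {})" for h :: "nat \<Rightarrow> nat set"
  define jj where "jj = (\<lambda>(\<sigma>::nat\<Rightarrow>nat, h). (\<sigma>, ext h))"
  define ii where "ii = (\<lambda>(\<sigma>::nat\<Rightarrow>nat, S::nat\<Rightarrow>nat set). (\<sigma>, restrict S {1..k}))"
  have finZ: "finite (Z i)" if "i \<in> {1..k}" for i using Z that finite_subset by blast
  have finSS: "finite (SS \<sigma> i)" if "i \<in> {1..k}" for \<sigma> i
    unfolding SS_def using finZ[OF that] by (auto intro: finite_subset[of _ "Pow (Z i)"])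
  have finP: "finite P" unfolding P_def by (rule finite_permutations) simp
  have finSig: "finite Sig" unfolding Sig_def using finP finSS by (auto intro!: finite_SigmaI finite_PiE)
  have b1: "ii (jj a) = a" if "a \<in> Sig" for a
  proof -
    obtain \<sigma> h where a: "a = (\<sigma>, h)" by fastforce
    then have h: "h \<in> PiE {1..k} (SS \<sigma>)" using that unfolding Sig_def by auto
    have "restrict (ext h) {1..k} = restrict h {1..k}" by (rule restrict_ext) (simp add: ext_def)
    also have "\<dots> = h" using h by simp
    finally show ?thesis unfolding a ii_def jj_def by simp
  qed
  have b2: "jj a \<in> choices k Z" if "a \<in> Sig" for a
  proof -
    obtain \<sigma> h where a: "a = (\<sigma>, h)" by fastforce
    then have h: "h \<in> PiE {1..k} (SS \<sigma>)" and s: "\<sigma> permutes {1..k}" using that unfolding Sig_def P_def by auto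
    have "\<forall>i\<in>{1..k}. h i \<subseteq> Z i \<and> card (h i) = \<sigma> i - 1" using h unfolding SS_def PiE_def Pi_def by blast
    then show ?thesis unfolding a jj_def choices_def ext_def using s by auto
  qed
  have b3: "jj (ii b) = b" if "b \<in> choices k Z" for b
  proof -
    obtain \<sigma> S where b: "b = (\<sigma>, S)" by fastforce
    then have "\<forall>i. i \<notin> {1..k} \<longrightarrow> S i = {}" using that unfolding choices_def by auto
    then have "ext (restrict S {1..k}) = S" unfolding ext_def by (intro HOL.ext) (auto simp: restrict_def)
    then show ?thesis unfolding b ii_def jj_def by simp
  qed
  have b4: "ii b \<in> Sig" if "b \<in> choices k Z" for b
  proof -
    obtain \<sigma> S where b: "b = (\<sigma>, S)" by fastforce
    then have s: "\<sigma> permutes {1..k}" and h: "\<forall>i\<in>{1..k}. S i \<subseteq> Z i \<and> card (S i) = \<sigma> i - 1"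
      using that unfolding choices_def by auto
    have "restrict S {1..k} \<in> PiE {1..k} (SS \<sigma>)" unfolding restrict_PiE_iff SS_def using h by blast
    then show ?thesis unfolding b ii_def Sig_def P_def using s by simp
  qed
  have "choices k Z \<subseteq> jj ` Sig" using b3 b4 by (metis image_eqI subsetI)
  then show finC: "finite (choices k Z)" using finSig finite_subset by blast
  have "(\<Sum>\<sigma>\<in>P. of_int (sign \<sigma>) * (\<Prod>i\<in>{1..k}. Ent Z \<beta> i (\<sigma> i - 1)))
      = (\<Sum>\<sigma>\<in>P. of_int (sign \<sigma>) * (\<Sum>h\<in>PiE {1..k} (SS \<sigma>). \<Prod>i\<in>{1..k}. pr (h i)))"
  proof (rule sum.cong[OF refl])
    fix \<sigma> assume "\<sigma> \<in> P"
    have "(\<Prod>i\<in>{1..k}. Ent Z \<beta> i (\<sigma> i - 1)) = (\<Prod>i\<in>{1..k}. \<Sum>S\<in>SS \<sigma> i. pr S)"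
      unfolding Ent_def SS_def pr_def by simp
    also have "\<dots> = (\<Sum>h\<in>PiE {1..k} (SS \<sigma>). \<Prod>i\<in>{1..k}. pr (h i))"
      by (rule prod_sum_PiE) (auto intro: finSS)
    finally show "of_int (sign \<sigma>) * (\<Prod>i\<in>{1..k}. Ent Z \<beta> i (\<sigma> i - 1)) = of_int (sign \<sigma>) * (\<Sum>h\<in>PiE {1..k} (SS \<sigma>). \<Prod>i\<in>{1..k}. pr (h i))"
      by simp
  qed
  also have "\<dots> = (\<Sum>\<sigma>\<in>P. \<Sum>h\<in>PiE {1..k} (SS \<sigma>). of_int (sign \<sigma>) * (\<Prod>i\<in>{1..k}. pr (h i)))"
    by (simp add: sum_distrib_left)
  also have "\<dots> = (\<Sum>(\<sigma>,h)\<in>Sig. of_int (sign \<sigma>) * (\<Prod>i\<in>{1..k}. pr (h i)))"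
    unfolding Sig_def by (rule sum.Sigma) (use finP finSS in \<open>auto intro: finite_PiE\<close>)
  also have "\<dots> = (\<Sum>ch\<in>choices k Z. of_int (sign (fst ch)) * (\<Prod>i\<in>{1..k}. pr (snd ch i)))"
  proof (rule sum.reindex_bij_witness[of _ ii jj])
    show "\<And>a. a \<in> Sig \<Longrightarrow> ii (jj a) = a" by (rule b1)
    show "\<And>a. a \<in> Sig \<Longrightarrow> jj a \<in> choices k Z" by (rule b2)
    show "\<And>b. b \<in> choices k Z \<Longrightarrow> jj (ii b) = b" by (rule b3)
    show "\<And>b. b \<in> choices k Z \<Longrightarrow> ii b \<in> Sig" by (rule b4)
    fix a assume "a \<in> Sig"
    obtain \<sigma> h where a: "a = (\<sigma>, h)" by fastforce
    have "(\<Prod>i\<in>{1..k}. pr (ext h i)) = (\<Prod>i\<in>{1..k}. pr (h i))"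
      by (rule prod.cong) (auto simp: ext_def)
    then show "of_int (sign (fst (jj a))) * (\<Prod>i\<in>{1..k}. pr (snd (jj a) i)) =
         (case a of (\<sigma>, h) \<Rightarrow> of_int (sign \<sigma>) * (\<Prod>i\<in>{1..k}. pr (h i)))"
      unfolding a jj_def by simp
  qed
  also have "\<dots> = (\<Sum>ch\<in>choices k Z. of_int (sign (fst ch)) * (\<Prod>j\<in>{1..n}. \<beta> j ^ count (multiset_union k (snd ch)) j))"
  proof (rule sum.cong[OF refl])
    fix ch assume ch: "ch \<in> choices k Z"
    then have "\<forall>i\<in>{1..k}. snd ch i \<subseteq> {1..n}" using Z unfolding choices_def by fastforce
    then have "(\<Prod>i\<in>{1..k}. pr (snd ch i)) = (\<Prod>j\<in>{1..n}. \<beta> j ^ count (multiset_union k (snd ch)) j)"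
      unfolding pr_def multiset_union_def by (intro mon) auto
    then show "of_int (sign (fst ch)) * (\<Prod>i\<in>{1..k}. pr (snd ch i)) = of_int (sign (fst ch)) * (\<Prod>j\<in>{1..n}. \<beta> j ^ count (multiset_union k (snd ch)) j)"
      by simp
  qed
  finally show "(\<Sum>\<sigma>\<in>{\<sigma>. \<sigma> permutes {1..k}}. of_int (sign \<sigma>) * (\<Prod>i\<in>{1..k}. Ent Z \<beta> i (\<sigma> i - 1)))
     = (\<Sum>ch\<in>choices k Z. of_int (sign (fst ch)) * (\<Prod>j\<in>{1..n}. \<beta> j ^ count (multiset_union k (snd ch)) j))"
    unfolding P_def .
qed



lemma LI:
  fixes E :: "nat \<Rightarrow> nat \<Rightarrow> 'a::field"
  assumes d: "det (mat (Suc k) (Suc k) (\<lambda>(i,t). if i = 0 \<and> t = 0 then 1 else if i = 0 \<or> t = 0 then 0 else E i t)) \<noteq> 0"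
    and h: "\<forall>t\<in>{1..k}. (\<Sum>i\<in>{1..k}. c i * E i t) = 0"
  shows "\<forall>i\<in>{1..k}. c i = 0"
proof -
  define A where "A = mat (Suc k) (Suc k) (\<lambda>(i,t). if i = 0 \<and> t = 0 then 1 else if i = 0 \<or> t = 0 then 0 else E i t)"
  have cA: "A \<in> carrier_mat (Suc k) (Suc k)" unfolding A_def by simp
  have cT: "transpose_mat A \<in> carrier_mat (Suc k) (Suc k)" using cA by simp
  have "det (transpose_mat A) \<noteq> 0" using d det_transpose[OF cA] unfolding A_def by simp
  then have nv: "\<not> (\<exists>v. v \<in> carrier_vec (Suc k) \<and> v \<noteq> 0\<^sub>v (Suc k) \<and> transpose_mat A *\<^sub>v v = 0\<^sub>v (Suc k))"
    using det_0_iff_vec_prod_zero_field[OF cT] by blast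
  define v where "v = vec (Suc k) (\<lambda>i. if i = 0 then 0 else c i)"
  have vc: "v \<in> carrier_vec (Suc k)" unfolding v_def by simp
  have "transpose_mat A *\<^sub>v v = 0\<^sub>v (Suc k)"
  proof (rule eq_vecI)
    show "dim_vec (transpose_mat A *\<^sub>v v) = dim_vec (0\<^sub>v (Suc k) :: 'a vec)" using cA by simp
    fix t assume "t < dim_vec (0\<^sub>v (Suc k) :: 'a vec)"
    then have t: "t < Suc k" by simp
    have "(transpose_mat A *\<^sub>v v) $ t = row (transpose_mat A) t \<bullet> v" using t cA by simp
    also have "\<dots> = (\<Sum>i\<in>{0..<Suc k}. row (transpose_mat A) t $ i * v $ i)"
      unfolding scalar_prod_def using vc by simp
    also have "\<dots> = (\<Sum>i\<in>{0..<Suc k}. A $$ (i, t) * v $ i)"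
      by (rule sum.cong) (use t cA in auto)
    also have "\<dots> = A $$ (0, t) * v $ 0 + (\<Sum>i\<in>{1..k}. A $$ (i, t) * v $ i)"
    proof -
      have "{0..<Suc k} = insert 0 {1..k}" by auto
      then show ?thesis by simp
    qed
    also have "\<dots> = 0"
    proof (cases "t = 0")
      case True
      have "(\<Sum>i\<in>{1..k}. A $$ (i, t) * v $ i) = 0"
        by (rule sum.neutral) (use True in \<open>auto simp: A_def\<close>)
      moreover have "v $ 0 = 0" unfolding v_def by simp
      ultimately show ?thesis by simp
    next
      case False
      then have t1: "t \<in> {1..k}" using t by auto
      have "(\<Sum>i\<in>{1..k}. A $$ (i, t) * v $ i) = (\<Sum>i\<in>{1..k}. c i * E i t)"
        by (rule sum.cong) (use t1 in \<open>auto simp: A_def v_def\<close>)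
      moreover have "v $ 0 = 0" unfolding v_def by simp
      ultimately show ?thesis using h t1 by simp
    qed
    finally show "(transpose_mat A *\<^sub>v v) $ t = 0\<^sub>v (Suc k) $ t" using t by simp
  qed
  then have "v = 0\<^sub>v (Suc k)" using nv vc by blast
  then show ?thesis
  proof (intro ballI)
    fix i assume "v = 0\<^sub>v (Suc k)" "i \<in> {1..k}"
    then have "v $ i = 0" by simp
    then show "c i = 0" using \<open>i \<in> {1..k}\<close> unfolding v_def by simp
  qed
qed



lemma choicesD:
  assumes "ch \<in> choices k Z"
  shows "fst ch permutes {1..k}" "\<forall>i\<in>{1..k}. snd ch i \<subseteq> Z i \<and> card (snd ch i) = fst ch i - 1"
    "\<forall>i. i \<notin> {1..k} \<longrightarrow> snd ch i = {}"
  using assms unfolding choices_def by (cases ch; simp)+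

lemma part1:
  fixes M :: "nat \<Rightarrow> nat \<Rightarrow> bool" and n k :: nat
  assumes k: "1 \<le> k" "k \<le> n"
    and w: "\<forall>i\<in>{1..k}. card (row_supp n M i) = n - k + 1"
    and mds: "MDS_condition n k M"
    and u: "unique_multiset_union k (zero_set n M)"
    and q: "card (UNIV :: 'a::{finite,field} set) \<ge> n + k - 1"
  shows "\<exists>G :: nat \<Rightarrow> nat \<Rightarrow> 'a. fits n k M G \<and> MDS_generator n k G"
proof -
  define Z where "Z = zero_set n M"
  have Zsub: "Z i \<subseteq> {1..n}" for i unfolding Z_def zero_set_def by auto
  have finZ: "finite (Z i)" for i using Zsub finite_subset by blast
  have Zcard: "card (Z i) = k - 1" if "i \<in> {1..k}" for i
  proof -
    have "row_supp n M i \<union> Z i = {1..n}" "row_supp n M i \<inter> Z i = {}"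
      unfolding Z_def zero_set_def row_supp_def by auto
    then have "card (row_supp n M i) + card (Z i) = n"
      using card_Un_disjoint[of "row_supp n M i" "Z i"] by (metis card_atLeastAtMost diff_Suc_1 finite_Un finite_atLeastAtMost)
    then show ?thesis using w that k by auto
  qed
  have Zcov: "\<exists>i\<in>{1..k}. j \<notin> Z i" if j: "j \<in> {1..n}" for j
  proof -
    have "card (\<Union>i\<in>{1..k}. row_supp n M i) \<ge> n - k + card {1..k}"
      using mds k unfolding MDS_condition_def by auto
    then have c: "card (\<Union>i\<in>{1..k}. row_supp n M i) \<ge> n" using k by auto
    have sub: "(\<Union>i\<in>{1..k}. row_supp n M i) \<subseteq> {1..n}" unfolding row_supp_def by auto
    have "(\<Union>i\<in>{1..k}. row_supp n M i) = {1..n}"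
      by (rule card_seteq[OF _ sub]) (use c in auto)
    then obtain i where "i \<in> {1..k}" "j \<in> row_supp n M i" using j by blast
    then show ?thesis unfolding Z_def zero_set_def row_supp_def by auto
  qed
  have finC: "finite (choices k Z)" using leib_expand(1)[of k Z n] Zsub by blast
  define ex where "ex ch = count (multiset_union k (snd ch))" for ch :: "(nat \<Rightarrow> nat) \<times> (nat \<Rightarrow> nat set)"
  have chsub: "snd ch i \<subseteq> Z i" if "ch \<in> choices k Z" "i \<in> {1..k}" for ch i
    using choicesD(2)[OF that(1)] that(2) by blast
  have chout: "snd ch i = {}" if "ch \<in> choices k Z" "i \<notin> {1..k}" for ch i
    using choicesD(3)[OF that(1)] that(2) by blast
  have excount: "ex ch j = (\<Sum>i\<in>{1..k}. if j \<in> snd ch i then 1 else 0)" if "ch \<in> choices k Z" for ch j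
  proof -
    have "ex ch j = (\<Sum>i\<in>{1..k}. count (mset_set (snd ch i)) j)"
      unfolding ex_def multiset_union_def by (rule count_sum)
    also have "\<dots> = (\<Sum>i\<in>{1..k}. if j \<in> snd ch i then 1 else 0)"
    proof (rule sum.cong[OF refl])
      fix i assume "i \<in> {1..k}"
      then have "finite (snd ch i)" using chsub[OF that] finZ finite_subset by blast
      then show "count (mset_set (snd ch i)) j = (if j \<in> snd ch i then 1 else 0)" by simp
    qed
    finally show ?thesis .
  qed
  have exbound: "ex ch j \<le> k - 1" if ch: "ch \<in> choices k Z" and j: "j \<in> {1..n}" for ch j
  proof -
    obtain i0 where i0: "i0 \<in> {1..k}" "j \<notin> Z i0" using Zcov[OF j] by blast
    have "ex ch j = (\<Sum>i\<in>{1..k} - {i0}. if j \<in> snd ch i then 1 else 0) + (if j \<in> snd ch i0 then 1 else 0)"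
      unfolding excount[OF ch] using i0(1) by (simp add: sum.remove)
    also have "(if j \<in> snd ch i0 then 1 else 0) = (0::nat)" using chsub[OF ch i0(1)] i0(2) by auto
    also have "(\<Sum>i\<in>{1..k} - {i0}. if j \<in> snd ch i then 1 else 0) \<le> of_nat (card ({1..k} - {i0})) * (1::nat)"
      by (rule sum_bounded_above) auto
    also have "card ({1..k} - {i0}) = k - 1" using i0(1) by simp
    finally show ?thesis by simp
  qed
  have exout: "ex ch j = 0" if ch: "ch \<in> choices k Z" and j: "j \<notin> {1..n}" for ch j
  proof -
    have "j \<notin> snd ch i" if "i \<in> {1..k}" for i using chsub[OF ch that] Zsub[of i] j by blast
    then show ?thesis unfolding excount[OF ch] by (intro sum.neutral) auto
  qed
  from u obtain U where "\<exists>!ch. ch \<in> choices k Z \<and> multiset_union k (snd ch) = U"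
    unfolding unique_multiset_union_def Z_def by blast
  then obtain ch0 where ch0: "ch0 \<in> choices k Z" "multiset_union k (snd ch0) = U"
    and uq: "\<And>ch. ch \<in> choices k Z \<Longrightarrow> multiset_union k (snd ch) = U \<Longrightarrow> ch = ch0" by blast
  define Ms where "Ms = ex ` choices k Z"
  define c where "c m = (\<Sum>ch\<in>{ch\<in>choices k Z. ex ch = m}. (of_int (sign (fst ch)) :: 'a))" for m
  define m0 where "m0 = ex ch0"
  have coll: "{m\<in>Ms. \<forall>j\<in>{1..n}. m j = m0 j} = {m0}"
  proof
    show "{m0} \<subseteq> {m\<in>Ms. \<forall>j\<in>{1..n}. m j = m0 j}" unfolding Ms_def m0_def using ch0 by auto
    show "{m\<in>Ms. \<forall>j\<in>{1..n}. m j = m0 j} \<subseteq> {m0}"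
    proof
      fix m assume m: "m \<in> {m\<in>Ms. \<forall>j\<in>{1..n}. m j = m0 j}"
      then obtain ch where ch: "ch \<in> choices k Z" "m = ex ch" unfolding Ms_def by blast
      have "m j = m0 j" for j
      proof (cases "j \<in> {1..n}")
        case True then show ?thesis using m by auto
      next
        case False then show ?thesis using exout[OF ch(1) False] exout[OF ch0(1) False] ch(2)
          unfolding m0_def by simp
      qed
      then show "m \<in> {m0}" by auto
    qed
  qed
  have "{ch\<in>choices k Z. ex ch = m0} = {ch0}"
  proof
    show "{ch0} \<subseteq> {ch\<in>choices k Z. ex ch = m0}" using ch0 unfolding m0_def by auto
    show "{ch\<in>choices k Z. ex ch = m0} \<subseteq> {ch0}"
    proof
      fix ch assume "ch \<in> {ch\<in>choices k Z. ex ch = m0}"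
      then have "ch \<in> choices k Z" "count (multiset_union k (snd ch)) = count (multiset_union k (snd ch0))"
        unfolding ex_def m0_def by auto
      then have "ch \<in> choices k Z" "multiset_union k (snd ch) = U" using ch0(2) count_inject by auto
      then show "ch \<in> {ch0}" using uq by blast
    qed
  qed
  then have cm0: "c m0 = of_int (sign (fst ch0))" unfolding c_def by simp
  have "c m0 \<noteq> 0" unfolding cm0 by (simp add: sign_def)
  then have coeffne: "(\<Sum>m\<in>{m\<in>Ms. \<forall>j\<in>{1..n}. m j = m0 j}. c m) \<noteq> 0" unfolding coll by simp
  have finMs: "finite Ms" unfolding Ms_def using finC by simp
  have Msb: "\<forall>m\<in>Ms. \<forall>j\<in>{1..n}. m j \<le> k - 1" unfolding Ms_def using exbound by blast
  have qq: "n + (k - 1) \<le> card (UNIV :: 'a set)" using q k by simp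
  obtain \<beta> :: "nat \<Rightarrow> 'a" where binj: "inj_on \<beta> {1..n}"
    and bne: "(\<Sum>m\<in>Ms. c m * (\<Prod>j\<in>{1..n}. \<beta> j ^ m j)) \<noteq> 0"
    using nonvanish[OF finMs Msb coeffne qq] by blast
  have "(\<Sum>m\<in>Ms. c m * (\<Prod>j\<in>{1..n}. \<beta> j ^ m j))
      = (\<Sum>ch\<in>choices k Z. of_int (sign (fst ch)) * (\<Prod>j\<in>{1..n}. \<beta> j ^ ex ch j))"
  proof -
    have "(\<Sum>m\<in>Ms. c m * (\<Prod>j\<in>{1..n}. \<beta> j ^ m j))
        = (\<Sum>m\<in>Ms. \<Sum>ch\<in>{ch. ch \<in> choices k Z \<and> ex ch = m}. of_int (sign (fst ch)) * (\<Prod>j\<in>{1..n}. \<beta> j ^ ex ch j))"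
      unfolding c_def sum_distrib_right by (rule sum.cong[OF refl], rule sum.cong) auto
    also have "\<dots> = (\<Sum>ch\<in>choices k Z. of_int (sign (fst ch)) * (\<Prod>j\<in>{1..n}. \<beta> j ^ ex ch j))"
      by (rule sum.group) (use finC finMs in \<open>auto simp: Ms_def\<close>)
    finally show ?thesis .
  qed
  also have "\<dots> = (\<Sum>\<sigma>\<in>{\<sigma>. \<sigma> permutes {1..k}}. of_int (sign \<sigma>) * (\<Prod>i\<in>{1..k}. Ent Z \<beta> i (\<sigma> i - 1)))"
    unfolding ex_def using leib_expand(2)[of k Z n \<beta>] Zsub by simp
  also have "\<dots> = det (mat (Suc k) (Suc k) (\<lambda>(i,t). if i = 0 \<and> t = 0 then 1 else if i = 0 \<or> t = 0 then 0 else Ent Z \<beta> i (t - 1)))"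
    by (rule det_ext[symmetric])
  finally have detne: "det (mat (Suc k) (Suc k) (\<lambda>(i,t). if i = 0 \<and> t = 0 then 1 else if i = 0 \<or> t = 0 then 0 else Ent Z \<beta> i (t - 1))) \<noteq> 0"
    using bne by simp
  have LIb: "\<forall>i\<in>{1..k}. c i = 0" if "\<forall>t\<in>{1..k}. (\<Sum>i\<in>{1..k}. c i * Ent Z \<beta> i (t - 1)) = 0" for c
    by (rule LI[OF detne that])
  define \<alpha> where "\<alpha> j = - \<beta> j" for j
  define f where "f i = (\<Prod>j\<in>Z i. [:\<beta> j, 1:])" for i
  define G where "G i j = poly (f i) (\<alpha> j)" for i j
  have polyf: "poly (f i) x = (\<Prod>j\<in>Z i. \<beta> j + x)" for i x unfolding f_def poly_prod by simp
  have Gval: "G i j = (\<Prod>j'\<in>Z i. \<beta> j' - \<beta> j)" for i j unfolding G_def polyf \<alpha>_def by simp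
  define g where "g cc = (\<Sum>i\<in>{1..k}. smult (cc i) (f i))" for cc
  have polyg: "poly (g cc) (\<alpha> j) = (\<Sum>i\<in>{1..k}. cc i * G i j)" for cc j
    unfolding g_def G_def poly_sum by simp
  have degf: "degree (f i) \<le> k - 1" if "i \<in> {1..k}" for i
  proof -
    have "degree (f i) \<le> sum (degree \<circ> (\<lambda>j. [:\<beta> j, 1:])) (Z i)"
      unfolding f_def by (rule degree_prod_sum_le[OF finZ])
    also have "\<dots> = card (Z i)" by simp
    finally show ?thesis using Zcard[OF that] by simp
  qed
  have degg: "degree (g cc) \<le> k - 1" for cc
    unfolding g_def
  proof (rule degree_sum_le)
    show "finite {1..k}" by simp
    fix i assume "i \<in> {1..k}"
    then show "degree (smult (cc i) (f i)) \<le> k - 1" using degf order.trans[OF degree_smult_le] by blast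
  qed
  have coeff_f: "coeff (f i) (k - t) = Ent Z \<beta> i (t - 1)" if "i \<in> {1..k}" "t \<in> {1..k}" for i t
  proof -
    have "coeff (f i) (k - t) = (\<Sum>S\<in>{S. S \<subseteq> Z i \<and> card S + (k - t) = card (Z i)}. \<Prod>j\<in>S. \<beta> j)"
      unfolding f_def by (rule coeff_prod_linear[OF finZ])
    also have "{S. S \<subseteq> Z i \<and> card S + (k - t) = card (Z i)} = {S. S \<subseteq> Z i \<and> card S = t - 1}"
      using Zcard[OF that(1)] that(2) by auto
    finally show ?thesis unfolding Ent_def .
  qed
  have ainj: "inj_on \<alpha> {1..n}"
  proof (rule inj_onI)
    fix x y assume xy: "x \<in> {1..n}" "y \<in> {1..n}" "\<alpha> x = \<alpha> y"
    then have "\<beta> x = \<beta> y" unfolding \<alpha>_def by simp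
    then show "x = y" using inj_onD[OF binj _ xy(1,2)] by blast
  qed
  have K: "\<forall>i\<in>{1..k}. cc i = 0" if kc: "k \<le> card {j\<in>{1..n}. (\<Sum>i\<in>{1..k}. cc i * G i j) = 0}" for cc
  proof -
    define J where "J = {j\<in>{1..n}. (\<Sum>i\<in>{1..k}. cc i * G i j) = 0}"
    have g0: "g cc = 0"
    proof (rule ccontr)
      assume ne: "g cc \<noteq> 0"
      have "\<alpha> ` J \<subseteq> {x. poly (g cc) x = 0}" unfolding J_def using polyg by auto
      then have "card (\<alpha> ` J) \<le> card {x. poly (g cc) x = 0}" by (rule card_mono[OF poly_roots_finite[OF ne]])
      also have "\<dots> \<le> degree (g cc)" by (rule card_poly_roots_bound[OF ne])
      also have "\<dots> \<le> k - 1" by (rule degg)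
      finally have "card (\<alpha> ` J) \<le> k - 1" .
      moreover have "card (\<alpha> ` J) = card J"
        by (rule card_image, rule inj_on_subset[OF ainj]) (auto simp: J_def)
      ultimately show False using kc k unfolding J_def[symmetric] by linarith
    qed
    have "\<forall>t\<in>{1..k}. (\<Sum>i\<in>{1..k}. cc i * Ent Z \<beta> i (t - 1)) = 0"
    proof
      fix t assume t: "t \<in> {1..k}"
      have "0 = coeff (g cc) (k - t)" using g0 by simp
      also have "\<dots> = (\<Sum>i\<in>{1..k}. cc i * coeff (f i) (k - t))" unfolding g_def coeff_sum by simp
      also have "\<dots> = (\<Sum>i\<in>{1..k}. cc i * Ent Z \<beta> i (t - 1))"
        by (rule sum.cong) (use coeff_f t in auto)
      finally show "(\<Sum>i\<in>{1..k}. cc i * Ent Z \<beta> i (t - 1)) = 0" by simp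
    qed
    then show ?thesis by (rule LIb)
  qed
  define wd where "wd cc = (\<lambda>j. if j \<in> {1..n} then (\<Sum>i\<in>{1..k}. cc i * G i j) else 0)" for cc
  have code: "gen_code n k G = range wd" unfolding gen_code_def wd_def by auto
  have cardsplit: "card {j\<in>{1..n}. P j} + card {j\<in>{1..n}. \<not> P j} = n" for P
  proof -
    have "{1..n} = {j\<in>{1..n}. P j} \<union> {j\<in>{1..n}. \<not> P j}" by auto
    then have "card {1..n} = card ({j\<in>{1..n}. P j} \<union> {j\<in>{1..n}. \<not> P j})" by (rule arg_cong)
    also have "\<dots> = card {j\<in>{1..n}. P j} + card {j\<in>{1..n}. \<not> P j}"
      by (rule card_Un_disjoint) auto
    finally show ?thesis by simp
  qed
  have distlow: "n - k + 1 \<le> hamming_dist n (wd c1) (wd c2)" if neq: "wd c1 \<noteq> wd c2" for c1 c2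
  proof (rule ccontr)
    assume lt: "\<not> n - k + 1 \<le> hamming_dist n (wd c1) (wd c2)"
    define cc where "cc i = c1 i - c2 i" for i
    have eqs: "(wd c1 j \<noteq> wd c2 j) = ((\<Sum>i\<in>{1..k}. cc i * G i j) \<noteq> 0)" if "j \<in> {1..n}" for j
      using that unfolding wd_def cc_def by (simp add: left_diff_distrib sum_subtractf)
    have "{j\<in>{1..n}. wd c1 j \<noteq> wd c2 j} = {j\<in>{1..n}. (\<Sum>i\<in>{1..k}. cc i * G i j) \<noteq> 0}" using eqs by auto
    then have "card {j\<in>{1..n}. (\<Sum>i\<in>{1..k}. cc i * G i j) \<noteq> 0} < n - k + 1"
      using lt unfolding hamming_dist_def by simp
    then have "k \<le> card {j\<in>{1..n}. (\<Sum>i\<in>{1..k}. cc i * G i j) = 0}"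
      using cardsplit[of "\<lambda>j. (\<Sum>i\<in>{1..k}. cc i * G i j) = 0"] k by linarith
    then have c0: "\<forall>i\<in>{1..k}. cc i = 0" by (rule K)
    have "wd c1 = wd c2"
    proof
      fix j
      have "(\<Sum>i\<in>{1..k}. c1 i * G i j) = (\<Sum>i\<in>{1..k}. c2 i * G i j)"
        by (rule sum.cong) (use c0 in \<open>auto simp: cc_def\<close>)
      then show "wd c1 j = wd c2 j" unfolding wd_def by simp
    qed
    then show False using neq by simp
  qed
  define \<delta> where "\<delta> i = (if i = (1::nat) then 1 else 0 :: 'a)" for i
  have wdd: "wd \<delta> j = (if j \<in> {1..n} then G 1 j else 0)" for j
  proof -
    have "(\<Sum>i\<in>{1..k}. \<delta> i * G i j) = (\<Sum>i\<in>{1..k}. if i = 1 then G i j else 0)"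
      by (rule sum.cong) (auto simp: \<delta>_def)
    also have "\<dots> = G 1 j" using k by (simp add: sum.delta)
    finally show ?thesis unfolding wd_def by simp
  qed
  have wd0: "wd (\<lambda>_. 0) = (\<lambda>_. 0)" unfolding wd_def by auto
  have G1: "G 1 j \<noteq> 0 \<longleftrightarrow> j \<notin> Z 1" if j: "j \<in> {1..n}" for j
  proof -
    have "G 1 j = 0 \<longleftrightarrow> (\<exists>j'\<in>Z 1. \<beta> j' - \<beta> j = 0)" unfolding Gval using finZ by (simp add: prod_zero_iff)
    also have "\<dots> \<longleftrightarrow> j \<in> Z 1"
    proof
      assume "\<exists>j'\<in>Z 1. \<beta> j' - \<beta> j = 0"
      then obtain j' where "j' \<in> Z 1" "\<beta> j' = \<beta> j" by auto
      moreover have "j' \<in> {1..n}" using \<open>j' \<in> Z 1\<close> Zsub by blast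
      ultimately show "j \<in> Z 1" using binj j unfolding inj_on_def by metis
    next
      assume "j \<in> Z 1" then show "\<exists>j'\<in>Z 1. \<beta> j' - \<beta> j = 0" by auto
    qed
    finally show ?thesis by simp
  qed
  have hd: "hamming_dist n (wd \<delta>) (wd (\<lambda>_. 0)) = n - k + 1"
  proof -
    have "{j\<in>{1..n}. wd \<delta> j \<noteq> wd (\<lambda>_. 0) j} = {1..n} - Z 1" unfolding wd0 wdd using G1 by auto
    moreover have "card ({1..n} - Z 1) = n - (k - 1)"
      using card_Diff_subset[OF finZ Zsub[of 1]] Zcard[of 1] k by simp
    ultimately show ?thesis unfolding hamming_dist_def using k by simp
  qed
  have hd0: "hamming_dist n u u = 0" for u :: "nat \<Rightarrow> 'a" unfolding hamming_dist_def by simp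
  have neq: "wd \<delta> \<noteq> wd (\<lambda>_. 0)" using hd hd0[of "wd \<delta>"] by auto
  define D where "D = {hamming_dist n u v |u v. u \<in> gen_code n k G \<and> v \<in> gen_code n k G \<and> u \<noteq> v}"
  have "min_distance n (gen_code n k G) = Min D" unfolding min_distance_def D_def ..
  also have "Min D = n - k + 1"
  proof (rule Min_eqI)
    have "D \<subseteq> {..n}"
    proof
      fix x assume "x \<in> D"
      then obtain u v :: "nat \<Rightarrow> 'a" where "x = hamming_dist n u v" unfolding D_def by blast
      moreover have "card {j \<in> {1..n}. u j \<noteq> v j} \<le> card {1..n}" by (rule card_mono) auto
      ultimately show "x \<in> {..n}" unfolding hamming_dist_def by simp
    qed
    then show "finite D" using finite_subset by blast
    show "n - k + 1 \<le> y" if "y \<in> D" for y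
      using that distlow unfolding D_def code by blast
    show "n - k + 1 \<in> D" unfolding D_def code
      by (intro CollectI exI[of _ "wd \<delta>"] exI[of _ "wd (\<lambda>_. 0)"]) (use hd neq in auto)
  qed
  finally have md: "min_distance n (gen_code n k G) = n - k + 1" .
  have indep: "\<forall>i\<in>{1..k}. cc i = 0" if "\<forall>j\<in>{1..n}. (\<Sum>i\<in>{1..k}. cc i * G i j) = 0" for cc
  proof (rule K)
    have "{j\<in>{1..n}. (\<Sum>i\<in>{1..k}. cc i * G i j) = 0} = {1..n}" using that by auto
    then show "k \<le> card {j\<in>{1..n}. (\<Sum>i\<in>{1..k}. cc i * G i j) = 0}" using k by simp
  qed
  have fitsG: "fits n k M G"
    unfolding fits_def
  proof (intro ballI impI)
    fix i j assume "i \<in> {1..k}" "j \<in> {1..n}" "\<not> M i j"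
    then have "j \<in> Z i" unfolding Z_def zero_set_def by auto
    then show "G i j = 0" unfolding Gval using finZ by (auto simp: prod_zero_iff)
  qed
  show ?thesis using fitsG indep md unfolding MDS_generator_def by blast
qed


lemma zero_inter:
  fixes M :: "nat \<Rightarrow> nat \<Rightarrow> bool"
  assumes k: "1 \<le> k" "k \<le> n" and mds: "MDS_condition n k M"
    and I: "I \<subseteq> {1..k}" "I \<noteq> {}"
  shows "card (\<Inter>i\<in>I. zero_set n M i) \<le> k - card I"
proof -
  define X where "X = (\<Union>i\<in>I. row_supp n M i)"
  have X: "card X \<ge> n - k + card I" using mds I unfolding MDS_condition_def X_def by blast
  have Xs: "X \<subseteq> {1..n}" unfolding X_def row_supp_def by auto
  have "(\<Inter>i\<in>I. zero_set n M i) = {1..n} - X"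
    unfolding X_def zero_set_def row_supp_def using I(2) by auto
  then have "card (\<Inter>i\<in>I. zero_set n M i) = n - card X"
    using card_Diff_subset[OF finite_subset[OF Xs] Xs] by simp
  moreover have "card I \<le> k" using card_mono[OF _ I(1)] by simp
  moreover have "card X \<le> n" using card_mono[OF _ Xs] by simp
  ultimately show ?thesis using X by linarith
qed

lemma zero_card:
  assumes "1 \<le> k" "k \<le> n" "i \<in> {1..k}" "card (row_supp n M i) = n - k + 1"
  shows "card (zero_set n M i) = k - 1"
proof -
  have "row_supp n M i \<union> zero_set n M i = {1..n}" "row_supp n M i \<inter> zero_set n M i = {}"
    unfolding zero_set_def row_supp_def by auto
  then have "card (row_supp n M i) + card (zero_set n M i) = n"
    using card_Un_disjoint[of "row_supp n M i" "zero_set n M i"]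
    by (metis card_atLeastAtMost diff_Suc_1 finite_Un finite_atLeastAtMost)
  then show ?thesis using assms by auto
qed

theorem lemma3:
  shows "(\<forall>n k M. 1 \<le> k \<and> k \<le> n
            \<and> (\<forall>i\<in>{1..k}. card (row_supp n M i) = n - k + 1)
            \<and> MDS_condition n k M
            \<and> unique_multiset_union k (zero_set n M)
            \<and> card (UNIV :: 'a::{finite,field} set) \<ge> n + k - 1
          \<longrightarrow> (\<exists>G :: nat \<Rightarrow> nat \<Rightarrow> 'a. fits n k M G \<and> MDS_generator n k G))
       \<and> ((\<forall>n k (Z :: nat \<Rightarrow> nat set). 1 \<le> k \<and> k \<le> n
            \<and> (\<forall>i\<in>{1..k}. Z i \<subseteq> {1..n} \<and> card (Z i) = k - 1)
            \<and> (\<forall>I. I \<subseteq> {1..k} \<and> I \<noteq> {} \<longrightarrow> card (\<Inter>i\<in>I. Z i) \<le> k - card I)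
            \<longrightarrow> unique_multiset_union k Z)
          \<longrightarrow> (\<forall>n k M. 1 \<le> k \<and> k \<le> n
            \<and> (\<forall>i\<in>{1..k}. card (row_supp n M i) = n - k + 1)
            \<and> MDS_condition n k M
            \<and> card (UNIV :: 'a set) \<ge> n + k - 1
          \<longrightarrow> (\<exists>G :: nat \<Rightarrow> nat \<Rightarrow> 'a. fits n k M G \<and> MDS_generator n k G)))"
proof (intro conjI impI allI)
  fix n k M
  assume "1 \<le> k \<and> k \<le> n \<and> (\<forall>i\<in>{1..k}. card (row_supp n M i) = n - k + 1) \<and> MDS_condition n k M
     \<and> unique_multiset_union k (zero_set n M) \<and> card (UNIV :: 'a set) \<ge> n + k - 1"
  then show "\<exists>G :: nat \<Rightarrow> nat \<Rightarrow> 'a. fits n k M G \<and> MDS_generator n k G"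
    using part1 by blast
next
  fix n k M
  assume H: "\<forall>n k (Z :: nat \<Rightarrow> nat set). 1 \<le> k \<and> k \<le> n
            \<and> (\<forall>i\<in>{1..k}. Z i \<subseteq> {1..n} \<and> card (Z i) = k - 1)
            \<and> (\<forall>I. I \<subseteq> {1..k} \<and> I \<noteq> {} \<longrightarrow> card (\<Inter>i\<in>I. Z i) \<le> k - card I)
            \<longrightarrow> unique_multiset_union k Z"
    and A: "1 \<le> k \<and> k \<le> n \<and> (\<forall>i\<in>{1..k}. card (row_supp n M i) = n - k + 1) \<and> MDS_condition n k M
     \<and> card (UNIV :: 'a set) \<ge> n + k - 1"
  have "\<forall>i\<in>{1..k}. zero_set n M i \<subseteq> {1..n} \<and> card (zero_set n M i) = k - 1"
    using A zero_card[of k n _ M] unfolding zero_set_def by auto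
  moreover have "\<forall>I. I \<subseteq> {1..k} \<and> I \<noteq> {} \<longrightarrow> card (\<Inter>i\<in>I. zero_set n M i) \<le> k - card I"
    using A zero_inter[of k n M] by blast
  ultimately have "unique_multiset_union k (zero_set n M)" using H A by blast
  then show "\<exists>G :: nat \<Rightarrow> nat \<Rightarrow> 'a. fits n k M G \<and> MDS_generator n k G"
    using part1 A by blast
qed


end
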